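(* Let $J\subseteq\mathbb{R}$ be an interval, let $f$ be ordinal decreasing on $J$, and let $J_1,J_2$ be a partition of $J$ into two intervals with $J_1$ to the left of $J_2$. Then $o(f|_J)\le o(f|_{J_1})+o(f|_{J_2})$ (ordinal addition).
   Context: For $h:E\to\mathbb{R}$, a strictly decreasing sequence $x_1>x_2>\cdots$ in $E$ is $h$-bad if $h(x_1)>h(x_2)>\cdots$; $h$ is ordinal decreasing if there is no infinite $h$-bad sequence. For ordinal decreasing $h$, the tree $T_h$ has a vertex for each finite $h$-bad sequence (the empty sequence being the root), the parent of $\langle x_1>\cdots>x_n\rangle$ being $\langle x_1>\cdots>x_{n-1}\rangle$; each vertex gets the ordinal height $o(v)=\sup_{w\text{ child of }v}(o(w)+1)$, and $o(h)$ is the height of the root. $o(f|_D)$ denotes the ordinal type of the restriction of $f$ to $D$. *)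

theory Defs
  imports "HOL-Analysis.Analysis"
begin

definition bad_seq :: "(real \<Rightarrow> real) \<Rightarrow> real set \<Rightarrow> real list \<Rightarrow> bool" where
  "bad_seq h E xs \<longleftrightarrow> set xs \<subseteq> E \<and> sorted_wrt (\<lambda>a b. a > b) xs
      \<and> sorted_wrt (\<lambda>a b. h a > h b) xs"

definition ordinal_decreasing :: "(real \<Rightarrow> real) \<Rightarrow> real set \<Rightarrow> bool" where
  "ordinal_decreasing h E \<longleftrightarrow>
     \<not> (\<exists>x :: nat \<Rightarrow> real. \<forall>n. x n \<in> E \<and> x (Suc n) < x n \<and> h (x (Suc n)) < h (x n))"

definition tree_child :: "(real \<Rightarrow> real) \<Rightarrow> real set \<Rightarrow> (real list \<times> real list) set" where
  "tree_child h E = {(xs @ [y], xs) | xs y. bad_seq h E (xs @ [y])}"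

text \<open>Ambient well-order in which ordinal heights are computed: the successor cardinal
  of the continuum (as a well-order); every height of such a tree lies strictly below it.\<close>
definition height_ambient :: "real list set rel" where
  "height_ambient = cardSuc (card_of (UNIV :: real list set))"

text \<open>o(v) = sup over children w of (o(w)+1), i.e. the least ordinal strictly above all o(w).\<close>
definition vertex_height :: "(real \<Rightarrow> real) \<Rightarrow> real set \<Rightarrow> real list \<Rightarrow> real list set" where
  "vertex_height h E = wfrec (tree_child h E)
     (\<lambda>rk v. wo_rel.minim height_ambient
        {a \<in> Field height_ambient. \<forall>w. (w, v) \<in> tree_child h E \<longrightarrow>
            (rk w, a) \<in> height_ambient \<and> rk w \<noteq> a})"

text \<open>o(h|_E) as a well-order (the ordinal of all ambient elements below the root height).\<close>
definition ord_type :: "(real \<Rightarrow> real) \<Rightarrow> real set \<Rightarrow> real list set rel" where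
  "ord_type h E = Restr height_ambient (underS height_ambient (vertex_height h E []))"

definition ord_sum :: "'a rel \<Rightarrow> 'b rel \<Rightarrow> ('a + 'b) rel" where
  "ord_sum r s = map_prod Inl Inl ` r \<union> map_prod Inr Inr ` s
     \<union> {(Inl a, Inr b) | a b. a \<in> Field r \<and> b \<in> Field s}"

end

theory Submission
  imports Defs
begin

unbundle cardinal_syntax




abbreviation HH where "HH \<equiv> height_ambient"

lemma H_card: "Card_order HH"
  unfolding height_ambient_def by (simp add: cardSuc_Card_order card_of_Card_order)

lemma H_wo: "Well_order HH"
  using H_card card_order_on_well_order_on by blast

lemma H_wo_rel: "wo_rel HH"
  using H_wo wo_rel_def by blast

lemma H_inf: "\<not> finite (Field HH)"
  unfolding height_ambient_def
  using cardSuc_finite[OF card_of_Card_order, of "UNIV :: real list set"]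
  by (simp add: Field_card_of infinite_UNIV_listI)

lemma H_bounded:
  assumes "B \<subseteq> Field HH" and "|B| \<le>o |UNIV :: real list set|"
  shows "\<exists>j\<in>Field HH. \<forall>b\<in>B. (b,j) \<in> HH \<and> b \<noteq> j"
proof -
  have rc: "relChain HH (under HH)"
    unfolding relChain_def under_def using H_wo_rel
    by (auto dest: wo_rel.TRANS[THEN transD])
  have sub: "B \<subseteq> (\<Union>i\<in>Field HH. under HH i)"
  proof
    fix b assume "b \<in> B"
    then have "b \<in> Field HH" "(b,b) \<in> HH" using assms(1) H_wo_rel wo_rel.REFL[of HH]
      by (auto simp: refl_on_def)
    then show "b \<in> (\<Union>i\<in>Field HH. under HH i)" unfolding under_def by blast
  qed
  obtain i where i: "i \<in> Field HH" "B \<subseteq> under HH i"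
    using cardSuc_UNION[OF card_of_Card_order _ rc[unfolded height_ambient_def] sub[unfolded height_ambient_def] assms(2)]
    by (auto simp: Field_card_of infinite_UNIV_listI height_ambient_def)
  obtain j where j: "j \<in> Field HH" "i \<noteq> j" "(i,j) \<in> HH"
    using infinite_Card_order_limit[OF H_card H_inf i(1)] by blast
  have "\<forall>b\<in>B. (b,j) \<in> HH \<and> b \<noteq> j"
  proof
    fix b assume "b \<in> B"
    then have "(b,i) \<in> HH" using i unfolding under_def by auto
    then show "(b,j) \<in> HH \<and> b \<noteq> j"
      using j H_wo_rel wo_rel.TRANS[of HH] wo_rel.ANTISYM[of HH]
      by (metis antisymD transD)
  qed
  then show ?thesis using j by blast
qed

lemma rank_props:
  fixes R :: "(real list \<times> real list) set"
  assumes wfR: "wf R"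
    and rk: "\<And>v. rk v = wo_rel.minim HH {a \<in> Field HH. \<forall>w. (w,v) \<in> R \<longrightarrow> (rk w, a) \<in> HH \<and> rk w \<noteq> a}"
  shows "rk v \<in> Field HH \<and> (\<forall>w. (w,v) \<in> R \<longrightarrow> (rk w, rk v) \<in> HH \<and> rk w \<noteq> rk v)"
  using wfR
proof (induction v rule: wf_induct_rule)
  case (less v)
  let ?S = "{a \<in> Field HH. \<forall>w. (w,v) \<in> R \<longrightarrow> (rk w, a) \<in> HH \<and> rk w \<noteq> a}"
  have B: "rk ` {w. (w,v) \<in> R} \<subseteq> Field HH" using less by auto
  have "|rk ` {w. (w,v) \<in> R}| \<le>o |{w. (w,v) \<in> R}|" by (rule card_of_image)
  also have "|{w. (w,v) \<in> R}| \<le>o |UNIV :: real list set|" by (rule card_of_mono1) simp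
  finally obtain j where "j \<in> Field HH" "\<forall>b\<in>rk ` {w. (w,v) \<in> R}. (b,j) \<in> HH \<and> b \<noteq> j"
    using H_bounded[OF B] by blast
  then have "j \<in> ?S" by auto
  then have "rk v \<in> ?S" unfolding rk[of v]
    by (intro wo_rel.minim_in[OF H_wo_rel]) auto
  then show ?case by auto
qed

lemma rank_min:
  fixes R :: "(real list \<times> real list) set"
  assumes wfR: "wf R"
    and rk: "\<And>v. rk v = wo_rel.minim HH {a \<in> Field HH. \<forall>w. (w,v) \<in> R \<longrightarrow> (rk w, a) \<in> HH \<and> rk w \<noteq> a}"
    and g: "g \<in> Field HH" "(g, rk v) \<in> HH" "g \<noteq> rk v"
  shows "\<exists>w. (w,v) \<in> R \<and> (g, rk w) \<in> HH"
proof (rule ccontr)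
  assume "\<not> ?thesis"
  then have "\<forall>w. (w,v) \<in> R \<longrightarrow> (rk w, g) \<in> HH \<and> rk w \<noteq> g"
    using rank_props[OF wfR rk] g(1) H_wo_rel
    by (metis wo_rel.TOTALS)
  then have "(rk v, g) \<in> HH" unfolding rk[of v]
    using g(1) by (intro wo_rel.minim_least[OF H_wo_rel]) auto
  then show False using g H_wo_rel wo_rel.ANTISYM[of HH] by (metis antisymD)
qed





abbreviation seg where "seg a \<equiv> Restr HH (underS HH a)"

lemma seg_wo: "Well_order (seg a)"
  by (simp add: H_wo Well_order_Restr)

lemma seg_field: "Field (seg a) = underS HH a"
  using Field_Restr_ofilter[OF H_wo wo_rel.underS_ofilter[OF H_wo_rel]] .

lemma seg_seg:
  assumes "g \<in> underS HH a"
  shows "Restr (seg a) (underS (seg a) g) = seg g"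
proof -
  have tr: "trans HH" using H_wo_rel wo_rel.TRANS by blast
  have an: "antisym HH" using H_wo_rel wo_rel.ANTISYM by blast
  have "underS (seg a) g = underS HH g"
    using assms tr an unfolding underS_def
    by (auto dest: transD antisymD)
  then show ?thesis using assms tr an unfolding underS_def
    by (auto dest: transD antisymD)
qed

lemma seg_mono:
  assumes "(g, b) \<in> HH"
  shows "seg g \<le>o seg b"
proof -
  have tr: "trans HH" using H_wo_rel wo_rel.TRANS by blast
  have an: "antisym HH" using H_wo_rel wo_rel.ANTISYM by blast
  have "underS HH g \<subseteq> underS HH b" using assms tr an unfolding underS_def
    by (auto dest: transD antisymD)
  then show ?thesis
    using ofilter_subset_ordLeq[OF H_wo wo_rel.underS_ofilter[OF H_wo_rel] wo_rel.underS_ofilter[OF H_wo_rel]]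
    by blast
qed

lemma key:
  fixes R :: "(real list \<times> real list) set" and Q :: "real list \<Rightarrow> 'b rel"
  assumes wfR: "wf R"
    and rk: "\<And>v. rk v = wo_rel.minim HH {a \<in> Field HH. \<forall>w. (w,v) \<in> R \<longrightarrow> (rk w, a) \<in> HH \<and> rk w \<noteq> a}"
    and Qwo: "\<And>v. Well_order (Q v)"
    and Qlt: "\<And>w v. (w,v) \<in> R \<Longrightarrow> Q w <o Q v"
  shows "seg (rk v) \<le>o Q v"
  using wfR
proof (induction v rule: wf_induct_rule)
  case (less v)
  show ?case
  proof (rule ccontr)
    assume "\<not> ?case"
    then have "Q v <o seg (rk v)" using not_ordLeq_iff_ordLess[OF Qwo seg_wo] by blast
    then obtain g where g: "g \<in> underS HH (rk v)" "Q v =o Restr (seg (rk v)) (underS (seg (rk v)) g)"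
      using ordLess_iff_ordIso_Restr[OF seg_wo Qwo] seg_field by blast
    then have g2: "Q v =o seg g" using seg_seg by simp
    have gF: "g \<in> Field HH" "(g, rk v) \<in> HH" "g \<noteq> rk v" using g(1) unfolding underS_def Field_def by auto
    obtain w where w: "(w,v) \<in> R" "(g, rk w) \<in> HH" using rank_min[OF wfR rk gF] by blast
    have "seg g \<le>o seg (rk w)" using seg_mono[OF w(2)] .
    also have "seg (rk w) \<le>o Q w" using less w(1) by blast
    also have "Q w <o Q v" using Qlt w(1) .
    also have "Q v =o seg g" using g2 .
    finally show False using ordLess_irreflexive by blast
  qed
qed



lemma tree_child_iff: "(w, v) \<in> tree_child h E \<longleftrightarrow> (\<exists>y. w = v @ [y] \<and> bad_seq h E (v @ [y]))"
  unfolding tree_child_def by auto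

lemma wf_tree:
  assumes "ordinal_decreasing h E"
  shows "wf (tree_child h E)"
proof (rule ccontr)
  assume "\<not> wf (tree_child h E)"
  then obtain g where g: "\<And>i. (g (Suc i), g i) \<in> tree_child h E"
    unfolding wf_iff_no_infinite_down_chain by blast
  define x where "x n = last (g (Suc n))" for n
  have gs: "g (Suc n) = g n @ [x n] \<and> bad_seq h E (g n @ [x n])" for n
    using g[of n] unfolding tree_child_iff x_def by auto
  have "x n \<in> E \<and> x (Suc n) < x n \<and> h (x (Suc n)) < h (x n)" for n
  proof -
    have "bad_seq h E (g n @ [x n] @ [x (Suc n)])"
      using gs[of "Suc n"] gs[of n] by simp
    then show ?thesis unfolding bad_seq_def by (auto simp: sorted_wrt_append)
  qed
  then show False using assms unfolding ordinal_decreasing_def by blast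
qed

lemma rk_eq:
  assumes "ordinal_decreasing h E"
  shows "vertex_height h E v = wo_rel.minim height_ambient
        {a \<in> Field height_ambient. \<forall>w. (w, v) \<in> tree_child h E \<longrightarrow>
            (vertex_height h E w, a) \<in> height_ambient \<and> vertex_height h E w \<noteq> a}"
  apply (subst vertex_height_def)
  apply (subst wfrec[OF wf_tree[OF assms]])
  apply (simp add: cut_apply flip: vertex_height_def)
  done

lemma od_mono: "ordinal_decreasing h E \<Longrightarrow> E' \<subseteq> E \<Longrightarrow> ordinal_decreasing h E'"
  unfolding ordinal_decreasing_def by blast

lemma bad_prefix: "bad_seq h E (xs @ ys) \<Longrightarrow> bad_seq h E xs"
  unfolding bad_seq_def by (auto simp: sorted_wrt_append)

lemma bad_filter: "bad_seq h E xs \<Longrightarrow> bad_seq h (E \<inter> A) (filter (\<lambda>x. x \<in> A) xs)"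
  unfolding bad_seq_def by (auto simp: sorted_wrt_filter)



lemma ord_sum_simps[simp]:
  "(Inl a, Inl b) \<in> ord_sum r s \<longleftrightarrow> (a,b) \<in> r"
  "(Inr c, Inr d) \<in> ord_sum r s \<longleftrightarrow> (c,d) \<in> s"
  "(Inl a, Inr d) \<in> ord_sum r s \<longleftrightarrow> a \<in> Field r \<and> d \<in> Field s"
  "(Inr c, Inl b) \<notin> ord_sum r s"
  unfolding ord_sum_def by auto

lemma ord_sum_Field: "Field (ord_sum r s) = Inl ` Field r \<union> Inr ` Field s"
  unfolding ord_sum_def Field_def by force

lemma ord_sum_wf:
  assumes "wf (r - Id)" "wf (s - Id)"
  shows "wf (ord_sum r s - Id)"
proof -
  let ?A = "map_prod Inl Inl ` (r - Id) :: (('a + 'b) \<times> ('a + 'b)) set"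
  let ?B = "map_prod Inr Inr ` (s - Id) :: (('a + 'b) \<times> ('a + 'b)) set"
  let ?C = "{(Inl a, Inr b) | a b. a \<in> Field r \<and> b \<in> Field s} :: (('a + 'b) \<times> ('a + 'b)) set"
  have eq: "ord_sum r s - Id \<subseteq> ?A \<union> (?C \<union> ?B)" unfolding ord_sum_def by force
  have wA: "wf ?A" by (rule wf_map_prod_image[OF assms(1)]) simp
  have wB: "wf ?B" by (rule wf_map_prod_image[OF assms(2)]) simp
  have "?C \<subseteq> Wellfounded.measure (\<lambda>x. case x of Inl _ \<Rightarrow> 0 | Inr _ \<Rightarrow> 1)" by force
  then have wC: "wf ?C" by (rule wf_subset[OF wf_measure])
  have "wf (?C \<union> ?B)" by (rule wf_Un[OF wC wB]) force
  then have "wf (?A \<union> (?C \<union> ?B))" by (rule wf_Un[OF wA]) force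
  then show ?thesis using eq wf_subset by blast
qed
lemma ord_sum_wo:
  assumes r: "Well_order r" and s: "Well_order s"
  shows "Well_order (ord_sum r s)"
proof -
  have rr: "Refl r" "trans r" "antisym r" "Total r" "wf (r - Id)"
    using r unfolding well_order_on_def linear_order_on_def partial_order_on_def preorder_on_def by auto
  have ss: "Refl s" "trans s" "antisym s" "Total s" "wf (s - Id)"
    using s unfolding well_order_on_def linear_order_on_def partial_order_on_def preorder_on_def by auto
  have "Refl (ord_sum r s)"
    using rr(1) ss(1) unfolding ord_sum_Field refl_on_def by (auto simp: ord_sum_def)
  moreover have "trans (ord_sum r s)"
    unfolding trans_def
  proof (intro allI impI)
    fix x y z assume "(x,y) \<in> ord_sum r s" "(y,z) \<in> ord_sum r s"
    then show "(x,z) \<in> ord_sum r s"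
      using rr(2) ss(2) by (cases x; cases y; cases z; simp; meson FieldI1 FieldI2 transD)
  qed
  moreover have "antisym (ord_sum r s)"
    unfolding antisym_def
  proof (intro allI impI)
    fix x y assume "(x,y) \<in> ord_sum r s" "(y,x) \<in> ord_sum r s"
    then show "x = y"
      using rr(3) ss(3) by (cases x; cases y; simp; meson antisymD)
  qed
  moreover have "Total (ord_sum r s)"
    unfolding total_on_def ord_sum_Field
  proof (intro ballI impI)
    fix x y assume "x \<in> Inl ` Field r \<union> Inr ` Field s" "y \<in> Inl ` Field r \<union> Inr ` Field s" "x \<noteq> y"
    then show "(x, y) \<in> ord_sum r s \<or> (y, x) \<in> ord_sum r s"
      using rr(4) ss(4) unfolding total_on_def by (elim UnE imageE) auto
  qed
  ultimately show ?thesis using ord_sum_wf[OF rr(5) ss(5)]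
    unfolding well_order_on_def linear_order_on_def partial_order_on_def preorder_on_def by (auto intro: FieldI1 FieldI2)
qed





lemma rkP:
  assumes "ordinal_decreasing h E"
  shows "vertex_height h E v \<in> Field HH \<and> (\<forall>w. (w,v) \<in> tree_child h E \<longrightarrow>
     (vertex_height h E w, vertex_height h E v) \<in> HH \<and> vertex_height h E w \<noteq> vertex_height h E v)"
  by (rule rank_props[OF wf_tree[OF assms] rk_eq[OF assms]])

lemma below_root:
  assumes od: "ordinal_decreasing h E"
  shows "bad_seq h E xs \<Longrightarrow> xs \<noteq> [] \<Longrightarrow> vertex_height h E xs \<in> underS HH (vertex_height h E [])"
proof (induction xs rule: rev_induct)
  case Nil then show ?case by simp
next
  case (snoc y ys)
  have e: "(ys @ [y], ys) \<in> tree_child h E" using snoc.prems(1) unfolding tree_child_iff by auto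
  then have s: "(vertex_height h E (ys @ [y]), vertex_height h E ys) \<in> HH"
     "vertex_height h E (ys @ [y]) \<noteq> vertex_height h E ys" using rkP[OF od] by blast+
  show ?case
  proof (cases "ys = []")
    case True then show ?thesis using s unfolding underS_def by auto
  next
    case False
    then have "vertex_height h E ys \<in> underS HH (vertex_height h E [])"
      using snoc.IH bad_prefix snoc.prems(1) by blast
    then show ?thesis using s H_wo_rel wo_rel.TRANS[of HH] wo_rel.ANTISYM[of HH]
      unfolding underS_def by (auto dest: transD antisymD)
  qed
qed

lemma underS_lt:
  assumes W: "Well_order W" and ab: "(a,b) \<in> W" "a \<noteq> b"
  shows "Restr W (underS W a) <o Restr W (underS W b)"
proof -
  have wr: "wo_rel W" using W wo_rel_def by blast
  have tr: "trans W" and an: "antisym W" using wr wo_rel.TRANS wo_rel.ANTISYM by blast+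
  have "underS W a \<subseteq> underS W b" using ab tr an unfolding underS_def by (auto dest: transD antisymD)
  moreover have "a \<in> underS W b" "a \<notin> underS W a" using ab unfolding underS_def by auto
  ultimately have "underS W a < underS W b" by blast
  then show ?thesis
    using ofilter_subset_ordLess[OF W wo_rel.underS_ofilter[OF wr] wo_rel.underS_ofilter[OF wr]] by blast
qed

theorem lemma7:
  fixes f :: "real \<Rightarrow> real" and J J1 J2 :: "real set"
  assumes "is_interval J" and "ordinal_decreasing f J"
    and "is_interval J1" and "is_interval J2"
    and "J1 \<union> J2 = J" and "J1 \<inter> J2 = {}"
    and "\<forall>x\<in>J1. \<forall>y\<in>J2. x < y"
  shows "(ord_type f J, ord_sum (ord_type f J1) (ord_type f J2)) \<in> ordLeq"
proof -
  note od = assms(2)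
  have od1: "ordinal_decreasing f J1" using od_mono[OF od] assms(5) by blast
  have od2: "ordinal_decreasing f J2" using od_mono[OF od] assms(5) by blast
  define rk1 where "rk1 = vertex_height f J1"
  define rk2 where "rk2 = vertex_height f J2"
  define W where "W = ord_sum (seg (rk1 [])) (seg (rk2 []))"
  have Wwo: "Well_order W" unfolding W_def by (intro ord_sum_wo seg_wo)
  have WF: "Field W = Inl ` underS HH (rk1 []) \<union> Inr ` underS HH (rk2 [])"
    unfolding W_def ord_sum_Field seg_field ..
  define phi where "phi v = (if filter (\<lambda>x. x \<in> J1) v \<noteq> [] then Inl (rk1 (filter (\<lambda>x. x \<in> J1) v))
      else Inr (rk2 v))" for v
  define Q where "Q v = (if v = [] then W else Restr W (underS W (phi v)))" for v
  have JJ1: "J \<inter> J1 = J1" using assms(5) by blast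
  have all2: "bad_seq f J2 u" if "bad_seq f J u" "filter (\<lambda>x. x \<in> J1) u = []" for u
    using that assms(5) unfolding bad_seq_def filter_empty_conv by blast
  have phiF: "phi u \<in> Field W" if u: "bad_seq f J u" "u \<noteq> []" for u
  proof (cases "filter (\<lambda>x. x \<in> J1) u = []")
    case True
    then have "rk2 u \<in> underS HH (rk2 [])"
      using below_root[OF od2 all2[OF u(1) True] u(2)] unfolding rk2_def by blast
    then show ?thesis using True unfolding phi_def WF by auto
  next
    case False
    have "bad_seq f J1 (filter (\<lambda>x. x \<in> J1) u)" using bad_filter[OF u(1), of J1] JJ1 by simp
    then have "rk1 (filter (\<lambda>x. x \<in> J1) u) \<in> underS HH (rk1 [])"
      using below_root[OF od1 _ False] unfolding rk1_def by blast
    then show ?thesis using False unfolding phi_def WF by auto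
  qed
  have phiS: "(phi (v @ [y]), phi v) \<in> W \<and> phi (v @ [y]) \<noteq> phi v"
    if vy: "bad_seq f J (v @ [y])" and v: "v \<noteq> []" for v y
  proof -
    have bv: "bad_seq f J v" using bad_prefix vy by blast
    have F1: "phi (v @ [y]) \<in> Field W" and F2: "phi v \<in> Field W" using phiF vy bv v by auto
    have yJ: "y \<in> J" using vy unfolding bad_seq_def by auto
    show ?thesis
    proof (cases "y \<in> J1")
      case True
      have fy: "filter (\<lambda>x. x \<in> J1) (v @ [y]) = filter (\<lambda>x. x \<in> J1) v @ [y]" using True by simp
      show ?thesis
      proof (cases "filter (\<lambda>x. x \<in> J1) v = []")
        case True
        then show ?thesis using F1[unfolded WF] F2[unfolded WF] fy unfolding phi_def W_def by (auto simp: seg_field)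
      next
        case False
        have "bad_seq f J1 (filter (\<lambda>x. x \<in> J1) v @ [y])"
          using bad_filter[OF vy, of J1] JJ1 fy by simp
        then have "(filter (\<lambda>x. x \<in> J1) v @ [y], filter (\<lambda>x. x \<in> J1) v) \<in> tree_child f J1"
          unfolding tree_child_iff by auto
        then have "(rk1 (filter (\<lambda>x. x \<in> J1) v @ [y]), rk1 (filter (\<lambda>x. x \<in> J1) v)) \<in> HH"
          "rk1 (filter (\<lambda>x. x \<in> J1) v @ [y]) \<noteq> rk1 (filter (\<lambda>x. x \<in> J1) v)"
          using rkP[OF od1] unfolding rk1_def by blast+
        then show ?thesis using F1[unfolded WF] F2[unfolded WF] fy False unfolding phi_def W_def by (auto simp: seg_field)
      qed
    next
      case False
      have y2: "y \<in> J2" using False yJ assms(5) by blast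
      have gt: "\<forall>x\<in>set v. y < x" using vy unfolding bad_seq_def by (auto simp: sorted_wrt_append)
      have nv: "\<forall>x\<in>set v. x \<notin> J1" using gt y2 assms(7) by fastforce
      then have e1: "filter (\<lambda>x. x \<in> J1) v = []" "filter (\<lambda>x. x \<in> J1) (v @ [y]) = []"
        using False by (auto simp: filter_empty_conv)
      have "bad_seq f J2 (v @ [y])" using all2[OF vy e1(2)] .
      then have "(v @ [y], v) \<in> tree_child f J2" unfolding tree_child_iff by auto
      then have "(rk2 (v @ [y]), rk2 v) \<in> HH" "rk2 (v @ [y]) \<noteq> rk2 v"
        using rkP[OF od2] unfolding rk2_def by blast+
      then show ?thesis using F1[unfolded WF] F2[unfolded WF] e1 unfolding phi_def W_def by (auto simp: seg_field)
    qed
  qed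
  have Qwo: "Well_order (Q v)" for v unfolding Q_def using Wwo Well_order_Restr by auto
  have Qlt: "Q w <o Q v" if e: "(w, v) \<in> tree_child f J" for w v
  proof -
    obtain y where y: "w = v @ [y]" "bad_seq f J (v @ [y])" using e unfolding tree_child_iff by blast
    show ?thesis
    proof (cases "v = []")
      case True
      have "Field W \<noteq> {}" using phiF[OF y(2)] by auto
      then show ?thesis using True y underS_Restr_ordLess[OF Wwo] unfolding Q_def by simp
    next
      case False
      then show ?thesis using phiS[OF y(2) False] underS_lt[OF Wwo] y unfolding Q_def by simp
    qed
  qed
  have "seg (vertex_height f J []) \<le>o Q []"
    by (rule key[OF wf_tree[OF od] rk_eq[OF od] Qwo Qlt])
  then show ?thesis unfolding Q_def W_def ord_type_def rk1_def rk2_def by simp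
qed

end
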